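(* Let $n\in\mathbb{N}$ with $n\ge2$, $S:=\{0,\dots,n-1\}$, and let $C\subseteq\operatorname{codes}(S)$ be a fundamental set. Then the map $\mathbf G:(0,\infty)^S\to\mathbb{R}^C$, $\mathbf G(\rho):=(\alpha(x)|_\rho)_{x\in C}$, is injective when restricted to the set $\{\tau\in(0,\infty)^S:\tau(n-1)=1\}$.
   Context: A coronal code over $S$ of length $m$ is a formal string $x=c:p_0p_1\dots p_{m-1}$ with $c,p_i\in S$; $\operatorname{center}(x)=c$, $\operatorname{petals}(x)=\{p_0,\dots,p_{m-1}\}$; codes are identified up to rotation/reversal of the petal string, giving $\operatorname{codes}(S)$. For $a,b,c\in S$ (indeterminates), $c^a_b:=\arccos\!\Big(\frac{(c+a)^2+(c+b)^2-(a+b)^2}{2(c+a)(c+b)}\Big)$, and $\alpha(x):=\sum_{i=0}^{m-1} c^{p_i}_{p_{i+1\bmod m}}$. For $\rho\in(0,\infty)^S$, $\alpha(x)|_\rho$ is the value obtained by substituting $\rho(s)$ for each symbol $s$. A nonempty $C\subseteq\operatorname{codes}(S)$ is fundamental if $\{\operatorname{center}(x):x\in C\}=\{0,\dots,n-2\}$ and for every nonempty $K\subseteq\{0,\dots,n-2\}$ there is $D\subseteq C$ with $\{\operatorname{center}(x):x\in D\}=K$ and $\big(\bigcup_{x\in D}\operatorname{petals}(x)\big)\setminus K\ne\emptyset$. *)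

theory Defs
  imports Complex_Main "HOL-Library.FuncSet"
begin

text \<open>A raw coronal code is a pair (center, petal string), petal string nonempty.
  Coronal codes are the classes of raw codes modulo rotation and reversal of the petal string.\<close>

type_synonym raw_code = "nat \<times> nat list"

definition code_class :: "nat \<Rightarrow> nat list \<Rightarrow> raw_code set" where
  "code_class c ps = {(c, qs) | qs. \<exists>k. qs = rotate k ps \<or> qs = rotate k (rev ps)}"

definition codes :: "nat set \<Rightarrow> raw_code set set" where
  "codes S = {code_class c ps | c ps. c \<in> S \<and> set ps \<subseteq> S \<and> ps \<noteq> []}"

definition rep :: "raw_code set \<Rightarrow> raw_code" where
  "rep X = (SOME x. x \<in> X)"

definition center :: "raw_code set \<Rightarrow> nat" where
  "center X = fst (rep X)"

definition petals :: "raw_code set \<Rightarrow> nat set" where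
  "petals X = set (snd (rep X))"

definition angle :: "(nat \<Rightarrow> real) \<Rightarrow> nat \<Rightarrow> nat \<Rightarrow> nat \<Rightarrow> real" where
  "angle \<rho> c a b = arccos (((\<rho> c + \<rho> a)\<^sup>2 + (\<rho> c + \<rho> b)\<^sup>2 - (\<rho> a + \<rho> b)\<^sup>2)
                            / (2 * (\<rho> c + \<rho> a) * (\<rho> c + \<rho> b)))"

definition alpha_raw :: "raw_code \<Rightarrow> (nat \<Rightarrow> real) \<Rightarrow> real" where
  "alpha_raw x \<rho> = (let c = fst x; ps = snd x; m = length ps in
     (\<Sum>i<m. angle \<rho> c (ps ! i) (ps ! ((i + 1) mod m))))"

definition alpha :: "raw_code set \<Rightarrow> (nat \<Rightarrow> real) \<Rightarrow> real" where
  "alpha X \<rho> = alpha_raw (rep X) \<rho>"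

definition fundamental :: "nat \<Rightarrow> raw_code set set \<Rightarrow> bool" where
  "fundamental n C \<longleftrightarrow> C \<noteq> {} \<and> center ` C = {0..n-2} \<and>
     (\<forall>K. K \<noteq> {} \<and> K \<subseteq> {0..n-2} \<longrightarrow>
        (\<exists>D\<subseteq>C. center ` D = K \<and> (\<Union>x\<in>D. petals x) - K \<noteq> {}))"

definition G :: "raw_code set set \<Rightarrow> (nat \<Rightarrow> real) \<Rightarrow> raw_code set \<Rightarrow> real" where
  "G C \<rho> = (\<lambda>x\<in>C. alpha x \<rho>)"

definition pos_configs :: "nat set \<Rightarrow> (nat \<Rightarrow> real) set" where
  "pos_configs S = {\<rho> \<in> extensional S. \<forall>s\<in>S. \<rho> s > 0}"

end

theory Submission
  imports Defs
begin

lemma code_rep: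
  assumes "X \<in> codes S"
  shows "fst (rep X) \<in> S \<and> set (snd (rep X)) \<subseteq> S"
proof -
  obtain c ps where X: "X = code_class c ps" and c: "c \<in> S" and ps: "set ps \<subseteq> S"
    using assms unfolding codes_def by auto
  have "(c, ps) \<in> X" unfolding X code_class_def by (auto intro: exI[of _ 0])
  hence "rep X \<in> X" unfolding rep_def by (rule someI)
  then obtain k qs where "rep X = (c, qs)" "qs = rotate k ps \<or> qs = rotate k (rev ps)"
    unfolding X code_class_def by auto
  thus ?thesis using c ps by auto
qed

lemma angle_alt:
  assumes "\<rho> c > 0" "\<rho> a > 0" "\<rho> b > 0"
  shows "angle \<rho> c a b = arccos (1 - 2 * (\<rho> a / (\<rho> c + \<rho> a)) * (\<rho> b / (\<rho> c + \<rho> b)))"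
proof -
  have "((\<rho> c + \<rho> a)\<^sup>2 + (\<rho> c + \<rho> b)\<^sup>2 - (\<rho> a + \<rho> b)\<^sup>2)
                            / (2 * (\<rho> c + \<rho> a) * (\<rho> c + \<rho> b))
       = 1 - 2 * (\<rho> a / (\<rho> c + \<rho> a)) * (\<rho> b / (\<rho> c + \<rho> b))"
  proof -
    have n1: "\<rho> c + \<rho> a \<noteq> 0" "\<rho> c + \<rho> b \<noteq> 0" using assms by auto
    have num: "(\<rho> c + \<rho> a)\<^sup>2 + (\<rho> c + \<rho> b)\<^sup>2 - (\<rho> a + \<rho> b)\<^sup>2
       = 2 * (\<rho> c + \<rho> a) * (\<rho> c + \<rho> b) - 4 * \<rho> a * \<rho> b"
      by (simp add: algebra_simps power2_eq_square)
    have g: "\<And>A B x y :: real. A \<noteq> 0 \<Longrightarrow> B \<noteq> 0 \<Longrightarrow>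
       (2*A*B - 4*x*y)/(2*A*B) = 1 - 2*(x/A)*(y/B)"
      by (simp add: field_simps)
    show ?thesis unfolding num using g[OF n1] by simp
  qed
  thus ?thesis unfolding angle_def by simp
qed

lemma frac_le:
  fixes c a c' a' :: real
  assumes "c > 0" "a > 0" "c' > 0" "a' > 0" "a * c' \<le> a' * c"
  shows "a / (c + a) \<le> a' / (c' + a')"
proof -
  have "a * (c' + a') \<le> a' * (c + a)" using assms by (simp add: algebra_simps)
  thus ?thesis using assms by (simp add: divide_simps mult.commute)
qed

lemma frac_less:
  fixes c a c' a' :: real
  assumes "c > 0" "a > 0" "c' > 0" "a' > 0" "a * c' < a' * c"
  shows "a / (c + a) < a' / (c' + a')"
proof -
  have "a * (c' + a') < a' * (c + a)" using assms by (simp add: algebra_simps)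
  thus ?thesis using assms by (simp add: divide_simps mult.commute)
qed

lemma angle_mono:
  fixes \<rho> \<tau> :: "nat \<Rightarrow> real"
  assumes pos: "\<rho> c > 0" "\<rho> a > 0" "\<rho> b > 0" "\<tau> c > 0" "\<tau> a > 0" "\<tau> b > 0"
    and ha: "\<rho> a * \<tau> c \<le> \<tau> a * \<rho> c" and hb: "\<rho> b * \<tau> c \<le> \<tau> b * \<rho> c"
  shows "angle \<rho> c a b \<le> angle \<tau> c a b"
    and "\<rho> a * \<tau> c < \<tau> a * \<rho> c \<Longrightarrow> angle \<rho> c a b < angle \<tau> c a b"
proof -
  define x where "x = \<rho> a / (\<rho> c + \<rho> a)"
  define y where "y = \<rho> b / (\<rho> c + \<rho> b)"
  define x' where "x' = \<tau> a / (\<tau> c + \<tau> a)"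
  define y' where "y' = \<tau> b / (\<tau> c + \<tau> b)"
  have x: "0 < x" "x < 1" unfolding x_def using pos by (auto simp: divide_simps)
  have y: "0 < y" "y < 1" unfolding y_def using pos by (auto simp: divide_simps)
  have x': "0 < x'" "x' < 1" unfolding x'_def using pos by (auto simp: divide_simps)
  have y': "0 < y'" "y' < 1" unfolding y'_def using pos by (auto simp: divide_simps)
  have xx: "x \<le> x'" unfolding x_def x'_def by (rule frac_le) (use pos ha in auto)
  have yy: "y \<le> y'" unfolding y_def y'_def by (rule frac_le) (use pos hb in auto)
  have e1: "angle \<rho> c a b = arccos (1 - 2 * x * y)" using angle_alt[OF pos(1-3)] x_def y_def by simp
  have e2: "angle \<tau> c a b = arccos (1 - 2 * x' * y')" using angle_alt[OF pos(4-6)] x'_def y'_def by simp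
  have p1: "x * y \<le> x' * y'" using x y xx yy by (intro mult_mono) auto
  have b1: "0 < x * y" "x * y < 1" using x y mult_strict_mono[of x 1 y 1] by auto
  have b2: "0 < x' * y'" "x' * y' < 1" using x' y' mult_strict_mono[of x' 1 y' 1] by auto
  show "angle \<rho> c a b \<le> angle \<tau> c a b" unfolding e1 e2
    by (rule arccos_le_arccos) (use p1 b1 b2 in auto)
  assume "\<rho> a * \<tau> c < \<tau> a * \<rho> c"
  hence "x < x'" unfolding x_def x'_def by (intro frac_less) (use pos in auto)
  hence "x * y < x' * y'" using x y yy by (meson less_le_trans mult_strict_right_mono mult_left_mono x'(1) less_imp_le)
  show "angle \<rho> c a b < angle \<tau> c a b" unfolding e1 e2
    by (rule arccos_less_arccos) (use \<open>x * y < x' * y'\<close> b1 b2 in auto)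
qed

lemma half:
  fixes \<rho> \<tau> :: "nat \<Rightarrow> real"
  assumes n: "n \<ge> 2" and C: "C \<subseteq> codes {0..<n}" and F: "fundamental n C"
    and rp: "\<And>s. s < n \<Longrightarrow> \<rho> s > 0" and tp: "\<And>s. s < n \<Longrightarrow> \<tau> s > 0"
    and r1: "\<rho> (n - 1) = 1" and t1: "\<tau> (n - 1) = 1"
    and eq: "\<And>x. x \<in> C \<Longrightarrow> alpha x \<rho> = alpha x \<tau>"
    and that: "s < n"
  shows "\<rho> s \<le> \<tau> s"
proof (rule ccontr)
  assume "\<not> \<rho> s \<le> \<tau> s"
  hence s1: "\<rho> s / \<tau> s > 1" using tp[OF that] by simp
  define S where "S = {0..<n}"
  define f where "f = (\<lambda>s. \<rho> s / \<tau> s)"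
  define l where "l = Max (f ` S)"
  have fin: "finite (f ` S)" unfolding S_def by simp
  have fle: "f t \<le> l" if "t \<in> S" for t unfolding l_def using fin that by simp
  have "l \<in> f ` S" unfolding l_def using fin that S_def by (intro Max_in) auto
  then obtain c0 where c0: "c0 \<in> S" "f c0 = l" by auto
  have l1: "l > 1" using fle[of s] that s1 unfolding S_def f_def by auto
  define K where "K = {t \<in> S. f t = l}"
  have "n - 1 \<notin> K" unfolding K_def f_def using r1 t1 l1 by auto
  hence Ksub: "K \<subseteq> {0..n-2}"
  proof (intro subsetI)
    fix t assume "n - 1 \<notin> K" "t \<in> K"
    hence "t < n" "t \<noteq> n - 1" unfolding K_def S_def by auto
    thus "t \<in> {0..n-2}" by auto
  qed
  have Kne: "K \<noteq> {}" using c0 unfolding K_def by auto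
  have FF: "\<exists>D\<subseteq>C. center ` D = K \<and> (\<Union>x\<in>D. petals x) - K \<noteq> {}"
    using F Ksub Kne unfolding fundamental_def by simp
  obtain D where D: "D \<subseteq> C" "center ` D = K" "(\<Union>x\<in>D. petals x) - K \<noteq> {}"
    using FF by blast
  from D(3) obtain x p where x: "x \<in> D" "p \<in> petals x" "p \<notin> K" by auto
  have xC: "x \<in> C" using D x by auto
  obtain c qs where rep: "rep x = (c, qs)" by (cases "rep x")
  have cS: "c \<in> S" and qS: "set qs \<subseteq> S" using code_rep[of x "{0..<n}"] xC C rep S_def by auto
  have cK: "c \<in> K" using D(2) x(1) rep unfolding center_def by force
  have pq: "p \<in> set qs" using x(2) rep unfolding petals_def by simp
  have fc: "f c = l" using cK K_def by auto
  have pos: "\<And>t. t \<in> S \<Longrightarrow> \<rho> t > 0 \<and> \<tau> t > 0" using rp tp S_def by auto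
  have cond: "\<rho> t * \<tau> c \<le> \<tau> t * \<rho> c" if "t \<in> S" for t
  proof -
    have "\<rho> t / \<tau> t \<le> \<rho> c / \<tau> c" using fle[OF that] fc f_def by simp
    thus ?thesis using pos[OF that] pos[OF cS] by (simp add: divide_simps mult.commute)
  qed
  have pS: "p \<in> S" using pq qS by auto
  have condp: "\<rho> p * \<tau> c < \<tau> p * \<rho> c"
  proof -
    have "f p \<noteq> l" using x(3) pS K_def by auto
    hence "\<rho> p / \<tau> p < \<rho> c / \<tau> c" using fle[OF pS] fc f_def by simp
    thus ?thesis using pos[OF pS] pos[OF cS] by (simp add: divide_simps mult.commute)
  qed
  define m where "m = length qs"
  obtain i where i: "i < m" "qs ! i = p" using pq unfolding m_def by (auto simp: in_set_conv_nth)
  have nth: "qs ! j \<in> S" if "j < m" for j using qS that m_def by auto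
  have m0: "m > 0" using i by auto
  have nth2: "qs ! ((j + 1) mod m) \<in> S" for j using nth m0 by auto
  have "alpha x \<rho> < alpha x \<tau>"
    unfolding alpha_def alpha_raw_def rep Let_def fst_conv snd_conv m_def[symmetric]
  proof (rule sum_strict_mono_ex1)
    show "finite {..<m}" by simp
    show "\<forall>j\<in>{..<m}. angle \<rho> c (qs ! j) (qs ! ((j + 1) mod m)) \<le> angle \<tau> c (qs ! j) (qs ! ((j + 1) mod m))"
    proof
      fix j assume "j \<in> {..<m}"
      hence j1: "qs ! j \<in> S" and j2: "qs ! ((j + 1) mod m) \<in> S" using nth nth2 by auto
      show "angle \<rho> c (qs ! j) (qs ! ((j + 1) mod m)) \<le> angle \<tau> c (qs ! j) (qs ! ((j + 1) mod m))"
        by (rule angle_mono(1)) (use pos[OF cS] pos[OF j1] pos[OF j2] cond[OF j1] cond[OF j2] in auto)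
    qed
    show "\<exists>j\<in>{..<m}. angle \<rho> c (qs ! j) (qs ! ((j + 1) mod m)) < angle \<tau> c (qs ! j) (qs ! ((j + 1) mod m))"
    proof
      have j1: "qs ! i \<in> S" and j2: "qs ! ((i + 1) mod m) \<in> S" using nth nth2 i by auto
      show "angle \<rho> c (qs ! i) (qs ! ((i + 1) mod m)) < angle \<tau> c (qs ! i) (qs ! ((i + 1) mod m))"
        by (rule angle_mono(2)) (use pos[OF cS] pos[OF j1] pos[OF j2] cond[OF j1] cond[OF j2] condp i in auto)
      show "i \<in> {..<m}" using i by simp
    qed
  qed
  thus False using eq[OF xC] by simp
qed

theorem theorem4p2:
  fixes n :: nat and C :: "raw_code set set"
  assumes "n \<ge> 2"
    and "C \<subseteq> codes {0..<n}"
    and "fundamental n C"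
  shows "inj_on (G C) {\<tau> \<in> pos_configs {0..<n}. \<tau> (n - 1) = 1}"
proof (rule inj_onI)
  fix \<rho> \<tau> assume r: "\<rho> \<in> {\<tau> \<in> pos_configs {0..<n}. \<tau> (n - 1) = 1}"
    and t: "\<tau> \<in> {\<tau> \<in> pos_configs {0..<n}. \<tau> (n - 1) = 1}" and g: "G C \<rho> = G C \<tau>"
  have eq: "alpha x \<rho> = alpha x \<tau>" if "x \<in> C" for x
    using fun_cong[OF g, of x] that unfolding G_def by simp
  have rp: "\<And>s. s < n \<Longrightarrow> \<rho> s > 0" and tp: "\<And>s. s < n \<Longrightarrow> \<tau> s > 0"
    using r t unfolding pos_configs_def by auto
  have a: "\<rho> s \<le> \<tau> s" if "s < n" for s
    using half[OF assms rp tp _ _ eq that] r t by auto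
  have b: "\<tau> s \<le> \<rho> s" if "s < n" for s
    using half[OF assms tp rp _ _ eq[symmetric] that] r t by auto
  show "\<rho> = \<tau>"
  proof
    fix s show "\<rho> s = \<tau> s"
    proof (cases "s < n")
      case True thus ?thesis using a b by (simp add: order_antisym)
    next
      case False thus ?thesis using r t unfolding pos_configs_def extensional_def by auto
    qed
  qed
qed

end
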